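(* Let $\Omega=\{0,1\}^{\mathbb{N}}$ with canonical process $X=(X_t)_{t\in\mathbb{N}}$, natural filtration $\mathcal{F}_t=\sigma(X_s,s\le t)$ ($\mathcal{F}_0$ trivial), $\mathcal{F}=\sigma(\bigcup_t\mathcal{F}_t)$. Define probability measures $\mathbb{P}_1,\mathbb{P}_2$ on $\mathcal{F}$ by: $\mathbb{P}_i(X_1=1)=1/2$ for $i=1,2$; conditionally on $X_1$, the variables $X_2,X_3,\dots$ are independent under both measures with, for $t\ge2$, $\mathbb{P}_1(X_t=1\mid X_1=1)=\mathbb{P}_2(X_t=1\mid X_1=0)=1/2$ and $\mathbb{P}_1(X_t=1\mid X_1=0)=\mathbb{P}_2(X_t=1\mid X_1=1)=2^{-t}$. Let $\mathcal{P}=\{\mathbb{P}_1,\mathbb{P}_2\}$ and $A=\{X_t=1\text{ for infinitely many }t\in\mathbb{N}\}$. Then $\mu^*(A)=1/2$, and there is no $\mathcal{P}$-e-process $(E_t)_{t\in\mathbb{N}_0}$ satisfying $\sup_{t\in\mathbb{N}_0}E_t\ge 1/\mu^*(A)=2$ at every point of $A$. More precisely, if $(E_t)$ is a $\mathcal{P}$-e-process and $c\in[1,\infty)$ is such that $\sup_tE_t\ge c$ on $A$, then $c<2$.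
   Context: Stopping times are with respect to the filtration above (values in $\mathbb{N}_0\cup\{\infty\}$), $\mathcal{T}$ is the set of all stopping times. Inverse-capital measure: $\mu^*(B) = \inf_{\tau\in\mathcal{T}:\, B\subseteq\{\tau<\infty\}} \sup_{\mathbb{P}\in\mathcal{P}} \mathbb{P}(\tau<\infty)$ for $B\subseteq\Omega$. A $\mathcal{P}$-e-process is a nonnegative (possibly $[0,\infty]$-valued) process $(E_t)_{t\in\mathbb{N}_0}$ adapted to $(\mathcal{F}_t)$ such that $\mathbb{E}_{\mathbb{P}}[E_\tau]\le 1$ for every $\mathbb{P}\in\mathcal{P}$ and every $\tau\in\mathcal{T}$, with the convention $E_\infty=\limsup_{t\to\infty}E_t$. *)

theory Defs
  imports "HOL-Probability.Probability"
begin

text \<open>Sample space Omega = {0,1}^N with N = {1,2,...}; a path is an (extensional)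
  function on {1..}, with X_t(w) = w t (True encodes 1).\<close>

definition Omega :: "(nat \<Rightarrow> bool) set" where
  "Omega = PiE {1..} (\<lambda>_. UNIV)"

text \<open>Natural filtration F_t = sigma(X_s, 1 <= s <= t), indexed by enat so that
  stopping times take values in N_0 \<union> {\<infinity>}; F_\<infinity> = sigma(all X_s) = F.\<close>

definition Fil :: "enat \<Rightarrow> (nat \<Rightarrow> bool) measure" where
  "Fil t = sigma Omega
     (\<Union>s\<in>{s. 1 \<le> s \<and> enat s \<le> t}. {{w \<in> Omega. w s \<in> B} | B. B \<subseteq> (UNIV :: bool set)})"

definition Qprod :: "(nat \<Rightarrow> real) \<Rightarrow> (nat \<Rightarrow> bool) measure" where
  "Qprod f = (\<Pi>\<^sub>M t\<in>{1..}. measure_pmf (bernoulli_pmf (f t)))"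

definition P1 :: "(nat \<Rightarrow> bool) measure" where
  "P1 = bind (measure_pmf (bernoulli_pmf (1/2)))
     (\<lambda>x. if x then Qprod (\<lambda>t. if t = 1 then 1 else 1/2)
                else Qprod (\<lambda>t. if t = 1 then 0 else 2 powr (- real t)))"

definition P2 :: "(nat \<Rightarrow> bool) measure" where
  "P2 = bind (measure_pmf (bernoulli_pmf (1/2)))
     (\<lambda>x. if x then Qprod (\<lambda>t. if t = 1 then 1 else 2 powr (- real t))
                else Qprod (\<lambda>t. if t = 1 then 0 else 1/2))"

definition Pfam :: "(nat \<Rightarrow> bool) measure set" where
  "Pfam = {P1, P2}"

definition mu_star :: "(nat \<Rightarrow> bool) set \<Rightarrow> real" where
  "mu_star B = (INF \<tau> \<in> {\<tau> :: (nat \<Rightarrow> bool) \<Rightarrow> enat.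
                      stopping_time Fil \<tau> \<and> B \<subseteq> {w \<in> Omega. \<tau> w < \<infinity>}}.
                  (SUP P \<in> Pfam. measure P {w \<in> Omega. \<tau> w < \<infinity>}))"

definition stopped :: "(nat \<Rightarrow> (nat \<Rightarrow> bool) \<Rightarrow> ennreal) \<Rightarrow> ((nat \<Rightarrow> bool) \<Rightarrow> enat)
                        \<Rightarrow> (nat \<Rightarrow> bool) \<Rightarrow> ennreal" where
  "stopped E \<tau> w = (case \<tau> w of enat n \<Rightarrow> E n w | \<infinity> \<Rightarrow> limsup (\<lambda>t. E t w))"

definition e_process :: "(nat \<Rightarrow> (nat \<Rightarrow> bool) \<Rightarrow> ennreal) \<Rightarrow> bool" where
  "e_process E \<longleftrightarrow>
     (\<forall>t. E t \<in> borel_measurable (Fil (enat t))) \<and>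
     (\<forall>P \<in> Pfam. \<forall>\<tau>. stopping_time Fil \<tau> \<longrightarrow> (\<integral>\<^sup>+ w. stopped E \<tau> w \<partial>P) \<le> 1)"

definition A_inf :: "(nat \<Rightarrow> bool) set" where
  "A_inf = {w \<in> Omega. infinite {t. 1 \<le> t \<and> w t}}"

end

theory Submission
  imports Defs
begin



lemma gens_Pow: "(\<Union>s\<in>{s. 1 \<le> s \<and> enat s \<le> T}. {{w \<in> Omega. w s \<in> B} | B. B \<subseteq> (UNIV :: bool set)}) \<subseteq> Pow Omega"
  by auto

lemma space_Fil[simp]: "space (Fil T) = Omega"
  unfolding Fil_def by (rule space_measure_of[OF gens_Pow])

lemma sets_Fil: "sets (Fil T) = sigma_sets Omega (\<Union>s\<in>{s. 1 \<le> s \<and> enat s \<le> T}. {{w \<in> Omega. w s \<in> B} | B. B \<subseteq> (UNIV :: bool set)})"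
  unfolding Fil_def by (rule sets_measure_of[OF gens_Pow])

lemma Fil_gen: "1 \<le> s \<Longrightarrow> enat s \<le> T \<Longrightarrow> {w\<in>Omega. w s \<in> B} \<in> sets (Fil T)"
  unfolding sets_Fil by (rule sigma_sets.Basic) blast

lemma Fil_mono: "T \<le> T' \<Longrightarrow> sets (Fil T) \<subseteq> sets (Fil T')"
  unfolding sets_Fil by (rule sigma_sets_mono') (auto intro: order_trans)

lemma space_Qprod[simp]: "space (Qprod f) = Omega"
  by (simp add: Qprod_def space_PiM Omega_def)

lemma prob_Qprod: "prob_space (Qprod f)"
  unfolding Qprod_def by (rule prob_space_PiM) (simp add: prob_space_measure_pmf)

lemma sets_Qprod: "sets (Qprod f) = sets (Qprod g)"
  unfolding Qprod_def by (rule sets_PiM_cong) auto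

lemma Qprod_coord: "1 \<le> s \<Longrightarrow> {w\<in>Omega. w s \<in> B} \<in> sets (Qprod f)"
proof -
  assume s: "1 \<le> s"
  have "(\<lambda>w. w s) \<in> measurable (Qprod f) (measure_pmf (bernoulli_pmf (f s)))"
    unfolding Qprod_def using s by (intro measurable_component_singleton) auto
  from measurable_sets[OF this, of B] show ?thesis by (simp add: vimage_def Int_def conj_commute)
qed

lemma Fil_sub_Qprod: "sets (Fil T) \<subseteq> sets (Qprod f)"
  unfolding sets_Fil
  apply (rule sets.sigma_sets_subset'[where M="Qprod f", simplified])
  using Qprod_coord apply blast
  by (metis space_Qprod sets.top)

lemma cyl_eq: "{w\<in>Omega. \<forall>s\<in>J. w s = b s} =
   prod_emb {1..} (\<lambda>t. measure_pmf (bernoulli_pmf (f t))) J (PiE J (\<lambda>s. {b s}))"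
  unfolding prod_emb_def Omega_def by (auto simp: PiE_iff extensional_def)

lemma cyl: "finite J \<Longrightarrow> J \<subseteq> {1..} \<Longrightarrow>
   emeasure (Qprod f) {w\<in>Omega. \<forall>s\<in>J. w s = b s} = (\<Prod>s\<in>J. ennreal (pmf (bernoulli_pmf (f s)) (b s)))"
  unfolding cyl_eq[of J b f] Qprod_def
  by (subst emeasure_PiM_emb) (auto simp: prob_space_measure_pmf emeasure_pmf_single)

lemma bind_eq:
  assumes "S \<in> sets (Qprod g)"
  shows "emeasure (bind (measure_pmf (bernoulli_pmf (1/2))) (\<lambda>x. if x then Qprod f1 else Qprod f0)) S
     = 1/2 * emeasure (Qprod f1) S + 1/2 * emeasure (Qprod f0) S"
proof -
  have m: "(\<lambda>x. if x then Qprod f1 else Qprod f0) \<in> measurable (measure_pmf (bernoulli_pmf (1/2))) (subprob_algebra (Qprod g))"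
    using sets_Qprod[of f1 g] sets_Qprod[of f0 g]
    by (auto simp: space_subprob_algebra prob_space_imp_subprob_space prob_Qprod)
  show ?thesis
    using assms by (subst emeasure_bind[OF _ m]) (simp_all add: mult.commute ennreal_divide_numeral[symmetric] divide_ennreal_def)
qed

lemma P1_eq: "S \<in> sets (Qprod g) \<Longrightarrow> emeasure P1 S =
  1/2 * emeasure (Qprod (\<lambda>t. if t = 1 then 1 else 1/2)) S + 1/2 * emeasure (Qprod (\<lambda>t. if t = 1 then 0 else 2 powr (- real t))) S"
  unfolding P1_def by (rule bind_eq)

lemma P2_eq: "S \<in> sets (Qprod g) \<Longrightarrow> emeasure P2 S =
  1/2 * emeasure (Qprod (\<lambda>t. if t = 1 then 1 else 2 powr (- real t))) S + 1/2 * emeasure (Qprod (\<lambda>t. if t = 1 then 0 else 1/2)) S"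
  unfolding P2_def by (rule bind_eq)

lemma sets_if: "sets (if x then Qprod a else Qprod b) = sets (Qprod g)"
  using sets_Qprod[of a g] sets_Qprod[of b g] by simp

lemma sets_P1: "sets P1 = sets (Qprod g)"
  unfolding P1_def by (rule sets_bind[OF sets_if]) simp
lemma sets_P2: "sets P2 = sets (Qprod g)"
  unfolding P2_def by (rule sets_bind[OF sets_if]) simp

lemma space_P1[simp]: "space P1 = Omega"
  using sets_eq_imp_space_eq[OF sets_P1[of f]] by simp
lemma space_P2[simp]: "space P2 = Omega"
  using sets_eq_imp_space_eq[OF sets_P2[of f]] by simp

lemma half_enn: "(1/2::ennreal) = ennreal (1/2)"
  using divide_ennreal[of 1 2] by simp

lemma half_half_enn: "1/2 + 1/2 = (1::ennreal)"
  unfolding half_enn by (subst ennreal_plus[symmetric]) auto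

lemma prob_P1: "prob_space P1"
proof
  have "Omega \<in> sets (Qprod f)" by (metis space_Qprod sets.top)
  from P1_eq[OF this] show "emeasure P1 (space P1) = 1"
    using prob_space.emeasure_space_1[OF prob_Qprod] space_Qprod
    by (simp add: half_half_enn)
qed

lemma prob_P2: "prob_space P2"
proof
  have "Omega \<in> sets (Qprod f)" by (metis space_Qprod sets.top)
  from P2_eq[OF this] show "emeasure P2 (space P2) = 1"
    using prob_space.emeasure_space_1[OF prob_Qprod] space_Qprod
    by (simp add: half_half_enn)
qed

lemma fil_dep:
  assumes "S \<in> sets (Fil (enat t))"
  shows "\<forall>w w'. w \<in> S \<longrightarrow> w' \<in> Omega \<longrightarrow> (\<forall>s\<in>{1..t}. w' s = w s) \<longrightarrow> w' \<in> S"
  using assms unfolding sets_Fil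
proof (induction rule: sigma_sets.induct)
  case (Basic a)
  then show ?case by auto
next
  case Empty
  then show ?case by auto
next
  case (Compl a)
  show ?case
  proof (intro allI impI)
    fix w w' assume w: "w \<in> Omega - a" and w': "w' \<in> Omega" and ag: "\<forall>s\<in>{1..t}. w' s = w s"
    have ag': "\<forall>s\<in>{1..t}. w s = w' s" using ag by simp
    have "w' \<notin> a"
    proof
      assume "w' \<in> a"
      then have "w \<in> a" using Compl.IH w ag' by blast
      then show False using w by blast
    qed
    then show "w' \<in> Omega - a" using w' by blast
  qed
next
  case (Union a)
  then show ?case by blast
qed



definition Z :: "nat \<Rightarrow> (nat \<Rightarrow> bool) set" where
  "Z N = {w\<in>Omega. \<forall>t\<ge>N. \<not> w t}"

lemma UN_shift: "(\<Union>t. A (t + (N::nat))) = (\<Union>t\<in>{N..}. (A t :: 'a set))"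
proof (intro subsetI equalityI)
  fix x assume "x \<in> (\<Union>t. A (t+N))"
  then obtain t where "x \<in> A (t+N)" by blast
  then show "x \<in> (\<Union>t\<in>{N..}. A t)" by (intro UN_I[of "t+N"]) auto
next
  fix x assume "x \<in> (\<Union>t\<in>{N..}. A t)"
  then obtain t where "t \<ge> N" "x \<in> A t" by auto
  then have "x \<in> A ((t-N)+N)" by simp
  then show "x \<in> (\<Union>t. A (t+N))" by blast
qed

lemma Z_sets: "1 \<le> N \<Longrightarrow> Z N \<in> sets (Qprod f)"
proof -
  assume N: "1 \<le> N"
  have "Z N = Omega - (\<Union>t\<in>{N..}. {w\<in>Omega. w t \<in> {True}})"
    unfolding Z_def by auto
  also have "\<dots> \<in> sets (Qprod f)"
  proof -
    have "range (\<lambda>t. {w\<in>Omega. w (t+N) \<in> {True}}) \<subseteq> sets (Qprod f)"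
      using N Qprod_coord[of _ "{True}" f] by auto
    from sets.Diff[OF sets.top sets.countable_UN[OF this]]
    have "Omega - (\<Union>t. {w\<in>Omega. w (t+N) \<in> {True}}) \<in> sets (Qprod f)" by simp
    moreover have "(\<Union>t. {w\<in>Omega. w (t+N) \<in> {True}}) = (\<Union>t\<in>{N..}. {w\<in>Omega. w t \<in> {True}})"
      by (rule UN_shift)
    ultimately show ?thesis by simp
  qed
  finally show ?thesis .
qed

lemma cyl_meas: "finite J \<Longrightarrow> J \<subseteq> {1..} \<Longrightarrow>
   measure (Qprod f) {w\<in>Omega. \<forall>s\<in>J. w s = b s} = (\<Prod>s\<in>J. pmf (bernoulli_pmf (f s)) (b s))"
  using cyl[of J f b] by (simp add: measure_def prod_ennreal prod_nonneg)

lemma cyl_sets: "finite J \<Longrightarrow> J \<subseteq> {1..} \<Longrightarrow> {w\<in>Omega. \<forall>s\<in>J. w s = b s} \<in> sets (Qprod f)"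
proof (cases "J = {}")
  case True
  then show ?thesis using sets.top[of "Qprod f"] by simp
next
  case False
  assume J: "finite J" "J \<subseteq> {1..}"
  have "{w\<in>Omega. \<forall>s\<in>J. w s = b s} = Omega \<inter> (\<Inter>s\<in>J. {w\<in>Omega. w s \<in> {b s}})"
    by auto
  also have "\<dots> \<in> sets (Qprod f)"
    using False J
    by (intro sets.Int sets.finite_INT Qprod_coord) (auto simp: sets.top[of "Qprod f", simplified])
  finally show ?thesis .
qed

lemma fair_Z:
  assumes f: "\<forall>t\<ge>2. f t = 1/2" and N: "2 \<le> N"
  shows "measure (Qprod f) (Z N) = 0"
proof -
  interpret Q: prob_space "Qprod f" by (rule prob_Qprod)
  have le: "measure (Qprod f) (Z N) \<le> (1/2)^(k+1)" for k
  proof -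
    have "Z N \<subseteq> {w\<in>Omega. \<forall>s\<in>{N..N+k}. w s = (\<lambda>_. False) s}" unfolding Z_def by auto
    moreover have "{w\<in>Omega. \<forall>s\<in>{N..N+k}. w s = (\<lambda>_. False) s} \<in> sets (Qprod f)"
      using N by (intro cyl_sets) auto
    ultimately have "measure (Qprod f) (Z N) \<le> measure (Qprod f) {w\<in>Omega. \<forall>s\<in>{N..N+k}. w s = (\<lambda>_. False) s}"
      by (intro Q.finite_measure_mono) 
    also have "\<dots> = (\<Prod>s\<in>{N..N+k}. pmf (bernoulli_pmf (f s)) False)"
      using N by (subst cyl_meas) auto
    also have "\<dots> = (\<Prod>s\<in>{N..N+k}. 1/2)"
      using N by (intro prod.cong refl) (subst f[rule_format], auto)
    also have "\<dots> = (1/2)^(k+1)" by simp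
    finally show ?thesis .
  qed
  show ?thesis
  proof (rule ccontr)
    assume "measure (Qprod f) (Z N) \<noteq> 0"
    then have pos: "0 < measure (Qprod f) (Z N)" using measure_nonneg[of "Qprod f" "Z N"] by linarith
    obtain n where "(1/2::real)^n < measure (Qprod f) (Z N)"
      using real_arch_pow_inv[OF pos, of "1/2"] by auto
    moreover have "(1/2::real)^(n+1) \<le> (1/2)^n" by (simp add: power_decreasing)
    ultimately show False using le[of n] by linarith
  qed
qed

lemma A_inf_eq: "A_inf = Omega - (\<Union>N. Z (N+2))"
proof (intro set_eqI iffI)
  fix w assume "w \<in> A_inf"
  then have w: "w \<in> Omega" "infinite {t. 1 \<le> t \<and> w t}" unfolding A_inf_def by auto
  have "w \<notin> Z (N+2)" for N
  proof
    assume "w \<in> Z (N+2)"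
    have "t < N+2" if "w t" for t
    proof (rule ccontr)
      assume "\<not> t < N+2"
      then show False using \<open>w \<in> Z (N+2)\<close> that unfolding Z_def by auto
    qed
    then have "{t. 1 \<le> t \<and> w t} \<subseteq> {..<N+2}" by auto
    then show False using w(2) finite_subset by blast
  qed
  then show "w \<in> Omega - (\<Union>N. Z (N+2))" using w by auto
next
  fix w assume w: "w \<in> Omega - (\<Union>N. Z (N+2))"
  show "w \<in> A_inf"
  proof (rule ccontr)
    assume "w \<notin> A_inf"
    then have "finite {t. 1 \<le> t \<and> w t}" using w unfolding A_inf_def by auto
    then obtain k where k: "{t. 1 \<le> t \<and> w t} \<subseteq> {..<k}" using finite_nat_bounded by blast
    have "\<not> w t" if "t \<ge> k+2" for t
    proof
      assume "w t"
      then have "t \<in> {t. 1 \<le> t \<and> w t}" using that by simp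
      with k have "t < k" by auto
      with that show False by simp
    qed
    then have "w \<in> Z (k+2)" using w unfolding Z_def by auto
    then show False using w by auto
  qed
qed

lemma A_inf_sets: "A_inf \<in> sets (Qprod f)"
proof -
  have z: "range (\<lambda>N. Z (N+2)) \<subseteq> sets (Qprod f)" using Z_sets by auto
  show ?thesis unfolding A_inf_eq
    using sets.Diff[OF sets.top sets.countable_UN[OF z]] by simp
qed

lemma fair_A:
  assumes f: "\<forall>t\<ge>2. f t = 1/2"
  shows "emeasure (Qprod f) (Omega - A_inf) = 0"
proof -
  interpret Q: prob_space "Qprod f" by (rule prob_Qprod)
  have "Omega - A_inf = (\<Union>N. Z (N+2))" unfolding A_inf_eq unfolding Z_def by auto
  also have "emeasure (Qprod f) \<dots> = 0"
  proof -
    have "Z (N+2) \<in> null_sets (Qprod f)" for N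
      using fair_Z[OF f, of "N+2"] Z_sets[of "N+2" f]
      by (simp add: Q.emeasure_eq_measure null_sets_def)
    then have "(\<Union>N. Z (N+2)) \<in> null_sets (Qprod f)" by (intro null_sets_UN) auto
    then show ?thesis by auto
  qed
  finally show ?thesis .
qed

definition Q1 where "Q1 = Qprod (\<lambda>t. if t = 1 then 1 else 1/2)"
definition Q0 where "Q0 = Qprod (\<lambda>t. if t = 1 then 0 else 2 powr (- real t))"
definition R1 where "R1 = Qprod (\<lambda>t. if t = 1 then 1 else 2 powr (- real t))"
definition R0 where "R0 = Qprod (\<lambda>t. if t = 1 then 0 else 1/2)"

definition B1 where "B1 = {w\<in>Omega. w 1} \<inter> A_inf"
definition B0 where "B0 = {w\<in>Omega. \<not> w 1} \<inter> A_inf"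

lemma B1_sets: "B1 \<in> sets (Qprod f)"
proof -
  have "{w\<in>Omega. w 1 \<in> {True}} \<in> sets (Qprod f)" by (rule Qprod_coord) simp
  moreover have "{w\<in>Omega. w 1 \<in> {True}} = {w\<in>Omega. w 1}" by auto
  ultimately show ?thesis unfolding B1_def by (intro sets.Int A_inf_sets) auto
qed
lemma B0_sets: "B0 \<in> sets (Qprod f)"
proof -
  have "{w\<in>Omega. w 1 \<in> {False}} \<in> sets (Qprod f)" by (rule Qprod_coord) simp
  moreover have "{w\<in>Omega. w 1 \<in> {False}} = {w\<in>Omega. \<not> w 1}" by auto
  ultimately show ?thesis unfolding B0_def by (intro sets.Int A_inf_sets) auto
qed

lemma Q1_B1: "emeasure Q1 B1 = 1"
proof -
  let ?f = "(\<lambda>t::nat. if t = 1 then 1 else 1/2::real)"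
  interpret Q: prob_space "Qprod ?f" by (rule prob_Qprod)
  have n1: "emeasure (Qprod ?f) {w\<in>Omega. \<forall>s\<in>{1}. w s = (\<lambda>_. False) s} = 0"
    by (subst cyl) auto
  have "Omega - B1 = {w\<in>Omega. \<forall>s\<in>{1}. w s = (\<lambda>_. False) s} \<union> (Omega - A_inf)"
    unfolding B1_def by auto
  also have "\<dots> \<in> null_sets (Qprod ?f)"
    using n1 fair_A[of ?f] A_inf_sets[of ?f] Qprod_coord[of 1 "{False}" ?f]
    by (intro null_sets.Un) (auto simp: null_sets_def sets.Diff[of _ "Qprod ?f", simplified] sets.top[of "Qprod ?f", simplified])
  finally have z0: "emeasure (Qprod ?f) (Omega - B1) = 0" by auto
  moreover have "emeasure (Qprod ?f) (space (Qprod ?f) - (Omega - B1)) = emeasure (Qprod ?f) (space (Qprod ?f)) - emeasure (Qprod ?f) (Omega - B1)"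
    using B1_sets[of ?f] z0 by (intro emeasure_compl) (auto simp: sets.top[of "Qprod ?f", simplified] Q.emeasure_space_1 Q.emeasure_finite)
  moreover have "space (Qprod ?f) - (Omega - B1) = B1" unfolding B1_def A_inf_def by auto
  ultimately show ?thesis unfolding Q1_def using Q.emeasure_space_1 by simp
qed

lemma R0_B0: "emeasure R0 B0 = 1"
proof -
  let ?f = "(\<lambda>t::nat. if t = 1 then 0 else 1/2::real)"
  interpret Q: prob_space "Qprod ?f" by (rule prob_Qprod)
  have n1: "emeasure (Qprod ?f) {w\<in>Omega. \<forall>s\<in>{1}. w s = (\<lambda>_. True) s} = 0"
    by (subst cyl) auto
  have "Omega - B0 = {w\<in>Omega. \<forall>s\<in>{1}. w s = (\<lambda>_. True) s} \<union> (Omega - A_inf)"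
    unfolding B0_def by auto
  also have "\<dots> \<in> null_sets (Qprod ?f)"
    using n1 fair_A[of ?f] A_inf_sets[of ?f] Qprod_coord[of 1 "{True}" ?f]
    by (intro null_sets.Un) (auto simp: null_sets_def sets.Diff[of _ "Qprod ?f", simplified] sets.top[of "Qprod ?f", simplified])
  finally have z0: "emeasure (Qprod ?f) (Omega - B0) = 0" by auto
  moreover have "emeasure (Qprod ?f) (space (Qprod ?f) - (Omega - B0)) = emeasure (Qprod ?f) (space (Qprod ?f)) - emeasure (Qprod ?f) (Omega - B0)"
    using B0_sets[of ?f] z0 by (intro emeasure_compl) (auto simp: sets.top[of "Qprod ?f", simplified] Q.emeasure_space_1 Q.emeasure_finite)
  moreover have "space (Qprod ?f) - (Omega - B0) = B0" unfolding B0_def A_inf_def by auto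
  ultimately show ?thesis unfolding R0_def using Q.emeasure_space_1 by simp
qed

lemma P1_B1: "emeasure P1 B1 \<ge> 1/2"
proof -
  have "emeasure P1 B1 = 1/2 * emeasure Q1 B1 + 1/2 * emeasure Q0 B1"
    using P1_eq[OF B1_sets[of "\<lambda>_. 0"]] unfolding Q1_def Q0_def by simp
  also have "\<dots> \<ge> 1/2" using Q1_B1 by simp
  finally show ?thesis .
qed

lemma Fil_cyl: "{w\<in>Omega. \<forall>s\<in>{1..t}. w s = b s} \<in> sets (Fil (enat t))"
proof (cases "t = 0")
  case True
  then show ?thesis using sets.top[of "Fil (enat t)"] by simp
next
  case False
  have "{w\<in>Omega. \<forall>s\<in>{1..t}. w s = b s} = Omega \<inter> (\<Inter>s\<in>{1..t}. {w\<in>Omega. w s \<in> {b s}})"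
    by auto
  also have "\<dots> \<in> sets (Fil (enat t))"
    using False
    by (intro sets.Int sets.finite_INT Fil_gen) (auto simp: sets.top[of "Fil (enat t)", simplified])
  finally show ?thesis .
qed

lemma E0_const:
  assumes "E 0 \<in> borel_measurable (Fil (enat 0))" "w \<in> Omega" "w' \<in> Omega"
  shows "E 0 w' = (E 0 w :: ennreal)"
proof -
  have "E 0 -` {E 0 w} \<inter> space (Fil (enat 0)) \<in> sets (Fil (enat 0))"
    by (rule measurable_sets[OF assms(1)]) simp
  then have S: "E 0 -` {E 0 w} \<inter> Omega \<in> sets (Fil (enat 0))" by simp
  have "w' \<in> E 0 -` {E 0 w} \<inter> Omega" using fil_dep[OF S, rule_format, of w w'] assms(2,3) by simp
  then show ?thesis by simp
qed

lemma E0_le: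
  assumes "e_process E" "w \<in> Omega"
  shows "E 0 w \<le> 1"
proof -
  have m: "E 0 \<in> borel_measurable (Fil (enat 0))" using assms(1) unfolding e_process_def by auto
  have "(\<integral>\<^sup>+ x. stopped E (\<lambda>_. enat 0) x \<partial>P1) \<le> 1"
    using assms(1) unfolding e_process_def Pfam_def by (auto intro: stopping_time_const)
  moreover have "(\<integral>\<^sup>+ x. stopped E (\<lambda>_. enat 0) x \<partial>P1) = (\<integral>\<^sup>+ x. E 0 w \<partial>P1)"
    using E0_const[where E=E and w=w, OF m assms(2)] by (intro nn_integral_cong) (simp add: stopped_def)
  moreover have "(\<integral>\<^sup>+ x. E 0 w \<partial>P1) = E 0 w"
    using prob_space.emeasure_space_1[OF prob_P1] by simp
  ultimately show ?thesis by simp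
qed

definition w0 :: "nat \<Rightarrow> bool" where "w0 = (\<lambda>s. if s = 0 then undefined else s \<noteq> 1)"

lemma w0_Omega: "w0 \<in> Omega"
  unfolding w0_def Omega_def by (auto simp: PiE_iff extensional_def)

lemma w0_A: "w0 \<in> A_inf"
proof -
  have "{2..} \<subseteq> {t. 1 \<le> t \<and> w0 t}" unfolding w0_def by auto
  then have "infinite {t. 1 \<le> t \<and> w0 t}" using infinite_Ici finite_subset by blast
  then show ?thesis using w0_Omega unfolding A_inf_def by auto
qed

lemma pw: "0 < 2 powr (- real a) \<and> 2 powr (- real a) \<le> (1::real)"
proof -
  have "1 \<le> 2 powr (real a)" by (rule ge_one_powr_ge_zero) auto
  then show ?thesis by (simp add: powr_minus inverse_le_1_iff)
qed

lemma Q0_cyl_pos: "0 < measure Q0 {w\<in>Omega. \<forall>s\<in>{1..t}. w s = w0 s}"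
  unfolding Q0_def
  by (subst cyl_meas) (auto intro!: prod_pos simp: w0_def pw)

lemma stopping_timeI':
  assumes "\<And>k. {w\<in>Omega. \<tau> w \<le> enat k} \<in> sets (Fil (enat k))"
  shows "stopping_time Fil \<tau>"
proof (rule stopping_timeI)
  fix m :: enat
  show "Measurable.pred (Fil m) (\<lambda>x. \<tau> x \<le> m)"
  proof (cases m)
    case (enat k)
    then show ?thesis using assms[of k] by (simp add: Measurable.pred_def)
  next
    case infinity
    then show ?thesis by simp
  qed
qed

lemma eproc_part:
  assumes E: "e_process E" and c: "1 \<le> c" and sup: "\<forall>w \<in> A_inf. ennreal c \<le> (SUP t. E t w)"
  shows "c < 2"
proof (rule ccontr)
  assume "\<not> c < 2"
  then have c2: "2 \<le> c" by simp
  have Em: "\<And>t. E t \<in> borel_measurable (Fil (enat t))" using E unfolding e_process_def by auto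
  have "ennreal c \<le> (SUP t. E t w0)" using sup w0_A by blast
  moreover have "ennreal 1 < ennreal c" using c2 by (subst ennreal_less_iff) auto
  ultimately have "ennreal 1 < (SUP t. E t w0)" by (rule less_le_trans[rotated])
  then obtain t where t1: "1 < E t w0" by (auto simp: less_SUP_iff)
  have "t \<noteq> 0" using E0_le[OF E w0_Omega] t1 by (metis not_le)
  then have t: "1 \<le> t" by simp
  define C where "C = {w\<in>Omega. \<forall>s\<in>{1..t}. w s = w0 s}"
  have C_Fil: "C \<in> sets (Fil (enat t))" unfolding C_def by (rule Fil_cyl)
  have S_Fil: "{w\<in>Omega. 1 < E t w} \<in> sets (Fil (enat t))"
  proof -
    have "Measurable.pred (Fil (enat t)) (\<lambda>w. 1 < E t w)" using Em[of t] by measurable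
    then show ?thesis by (simp add: Measurable.pred_def)
  qed
  have C_S: "\<And>w. w \<in> C \<Longrightarrow> 1 < E t w"
    using fil_dep[OF S_Fil] t1 w0_Omega unfolding C_def by auto
  have C_not1: "\<And>w. w \<in> C \<Longrightarrow> \<not> w 1" using t unfolding C_def w0_def by auto
  define p where "p = measure Q0 C"
  have p0: "0 < p" unfolding p_def C_def by (rule Q0_cyl_pos)
  have p1: "p \<le> 1" unfolding p_def Q0_def by (rule prob_space.prob_le_1[OF prob_Qprod])
  define c' where "c' = 2 - p/2"
  have c'1: "1 < c'" using p1 unfolding c'_def by simp
  have c'c: "c' < c" using p0 c2 unfolding c'_def by simp
  define \<sigma> where "\<sigma> w = (if \<exists>n. ennreal c' < E n w then enat (LEAST n. ennreal c' < E n w) else \<infinity>)" for w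
  define \<tau> where "\<tau> w = (if w 1 then \<sigma> w else if w \<in> C then enat t else \<infinity>)" for w
  have st: "stopping_time Fil \<tau>"
  proof (rule stopping_timeI')
    fix k
    have eq: "{w\<in>Omega. \<tau> w \<le> enat k} = ({w\<in>Omega. w 1} \<inter> {w\<in>Omega. \<exists>n\<le>k. ennreal c' < E n w})
       \<union> ({w\<in>Omega. \<not> w 1} \<inter> (if t \<le> k then C else {}))"
    proof -
      have "\<sigma> w \<le> enat k \<longleftrightarrow> (\<exists>n\<le>k. ennreal c' < E n w)" for w
      proof (cases "\<exists>n. ennreal c' < E n w")
        case True
        then have "ennreal c' < E (LEAST n. ennreal c' < E n w) w" by (rule LeastI_ex)
        then show ?thesis using True unfolding \<sigma>_def by (auto intro: Least_le order_trans)
      next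
        case False
        then show ?thesis unfolding \<sigma>_def by auto
      qed
      then show ?thesis unfolding \<tau>_def using C_not1 by auto
    qed
    show "{w\<in>Omega. \<tau> w \<le> enat k} \<in> sets (Fil (enat k))"
    proof (cases "k = 0")
      case True
      have nc: "\<not> ennreal c' < E 0 w" if "w \<in> Omega" for w
      proof -
        have "E 0 w \<le> ennreal 1" using E0_le[OF E that] by simp
        moreover have "ennreal 1 < ennreal c'" using c'1 by (subst ennreal_less_iff) auto
        ultimately have "E 0 w < ennreal c'" by (rule le_less_trans)
        then show ?thesis using less_asym by blast
      qed
      have e1: "{w\<in>Omega. \<exists>n\<le>k. ennreal c' < E n w} = {}"
        using True nc by auto
      have e2: "(if t \<le> k then C else {}) = {}" using True t by simp
      show ?thesis unfolding eq e1 e2 by simp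
    next
      case False
      have a: "{w\<in>Omega. w 1} \<in> sets (Fil (enat k))"
        using Fil_gen[of 1 "enat k" "{True}"] False by simp
      have "{w\<in>Omega. \<exists>n\<le>k. ennreal c' < E n w} = (\<Union>n\<in>{..k}. {w\<in>Omega. ennreal c' < E n w})" by auto
      also have "\<dots> \<in> sets (Fil (enat k))"
      proof (intro sets.finite_UN)
        fix n assume "n \<in> {..k}"
        then have sub: "sets (Fil (enat n)) \<subseteq> sets (Fil (enat k))" by (intro Fil_mono) simp
        have "Measurable.pred (Fil (enat n)) (\<lambda>w. ennreal c' < E n w)" using Em[of n] by measurable
        then show "{w\<in>Omega. ennreal c' < E n w} \<in> sets (Fil (enat k))"
          using sub by (auto simp: Measurable.pred_def)
      qed simp
      finally have b: "{w\<in>Omega. \<exists>n\<le>k. ennreal c' < E n w} \<in> sets (Fil (enat k))" .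
      have c: "(if t \<le> k then C else {}) \<in> sets (Fil (enat k))"
        using C_Fil Fil_mono[of "enat t" "enat k"] by auto
      have d: "{w\<in>Omega. \<not> w 1} \<in> sets (Fil (enat k))"
        using Fil_gen[of 1 "enat k" "{False}"] False by simp
      show ?thesis unfolding eq by (intro sets.Un sets.Int a b c d)
    qed
  qed
  have "(\<integral>\<^sup>+ w. stopped E \<tau> w \<partial>P1) \<le> 1"
    using E st unfolding e_process_def Pfam_def by auto
  moreover have "(\<integral>\<^sup>+ w. ennreal c' * indicator B1 w + indicator C w \<partial>P1) \<le> (\<integral>\<^sup>+ w. stopped E \<tau> w \<partial>P1)"
  proof (rule nn_integral_mono)
    fix w assume "w \<in> space P1"
    show "ennreal c' * indicator B1 w + indicator C w \<le> stopped E \<tau> w"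
    proof (cases "w \<in> B1")
      case True
      then have w1: "w 1" "w \<notin> C" using C_not1 unfolding B1_def by auto
      have "ennreal c \<le> (SUP t. E t w)" using sup True unfolding B1_def by blast
      moreover have "ennreal c' < ennreal c" using c'c c'1 by (subst ennreal_less_iff) auto
      ultimately have "ennreal c' < (SUP t. E t w)" by (rule less_le_trans[rotated])
      then have ex: "\<exists>n. ennreal c' < E n w" by (auto simp: less_SUP_iff)
      then have "ennreal c' < E (LEAST n. ennreal c' < E n w) w" by (rule LeastI_ex)
      then show ?thesis using True w1 ex unfolding stopped_def \<tau>_def \<sigma>_def by simp
    next
      case False
      show ?thesis
      proof (cases "w \<in> C")
        case True
        then have "\<tau> w = enat t" using C_not1 unfolding \<tau>_def by auto
        then show ?thesis using False True C_S[OF True] unfolding stopped_def by simp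
      next
        case False2: False
        then show ?thesis using False by simp
      qed
    qed
  qed
  moreover have "(\<integral>\<^sup>+ w. ennreal c' * indicator B1 w + indicator C w \<partial>P1) = ennreal c' * emeasure P1 B1 + emeasure P1 C"
  proof -
    have B1s: "B1 \<in> sets P1" using B1_sets sets_P1 by blast
    have Cs: "C \<in> sets P1" using C_Fil Fil_sub_Qprod sets_P1 by blast
    show ?thesis using B1s Cs
      by (subst nn_integral_add) (auto simp: nn_integral_cmult_indicator)
  qed
  moreover have "ennreal c' * emeasure P1 B1 + emeasure P1 C \<ge> ennreal (c'/2 + p/2)"
  proof -
    have Cq: "C \<in> sets (Qprod (\<lambda>_. 0))" using C_Fil Fil_sub_Qprod by blast
    have q0: "emeasure Q0 C = ennreal p" unfolding p_def Q0_def
      by (rule finite_measure.emeasure_eq_measure[OF prob_space.finite_measure[OF prob_Qprod]])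
    have "emeasure P1 C = 1/2 * emeasure Q1 C + 1/2 * emeasure Q0 C"
      using P1_eq[OF Cq] unfolding Q1_def Q0_def by simp
    also have "\<dots> \<ge> 1/2 * emeasure Q0 C" by (rule add_increasing) simp_all
    also have "1/2 * emeasure Q0 C = ennreal (1/2 * p)"
      unfolding half_enn q0 by (rule ennreal_mult[symmetric]) (use p0 in auto)
    finally have pc: "emeasure P1 C \<ge> ennreal (p/2)" by simp
    have "ennreal c' * emeasure P1 B1 \<ge> ennreal c' * (1/2)"
      using P1_B1 by (rule mult_left_mono) simp
    moreover have "ennreal c' * (1/2) = ennreal (c'/2)"
      unfolding half_enn by (subst ennreal_mult[symmetric]) (use c'1 in auto)
    ultimately have pb: "ennreal c' * emeasure P1 B1 \<ge> ennreal (c'/2)" by simp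
    have "ennreal (c'/2 + p/2) = ennreal (c'/2) + ennreal (p/2)"
      using c'1 p0 by (subst ennreal_plus) auto
    with pb pc show ?thesis by (simp add: add_mono)
  qed
  moreover have "c'/2 + p/2 > 1" using p0 unfolding c'_def by (simp add: field_simps)
  ultimately show False
    by (metis ennreal_le_1 leD order_trans)
qed




lemma meas_mix:
  assumes e: "emeasure M S = 1/2 * emeasure A S + 1/2 * emeasure B S"
    and pM: "prob_space M" and pA: "prob_space A" and pB: "prob_space B"
  shows "measure M S = 1/2 * measure A S + 1/2 * measure B S"
proof -
  have "ennreal (measure M S) = ennreal (1/2) * ennreal (measure A S) + ennreal (1/2) * ennreal (measure B S)"
    using e unfolding half_enn
    by (simp add: finite_measure.emeasure_eq_measure[OF prob_space.finite_measure[OF pM]]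
        finite_measure.emeasure_eq_measure[OF prob_space.finite_measure[OF pA]]
        finite_measure.emeasure_eq_measure[OF prob_space.finite_measure[OF pB]])
  also have "\<dots> = ennreal (1/2 * measure A S + 1/2 * measure B S)"
  proof -
    have h1: "ennreal (1/2) * ennreal (measure A S) = ennreal (1/2 * measure A S)"
      by (rule ennreal_mult[symmetric]) auto
    have h2: "ennreal (1/2) * ennreal (measure B S) = ennreal (1/2 * measure B S)"
      by (rule ennreal_mult[symmetric]) auto
    have h3: "ennreal (1/2 * measure A S) + ennreal (1/2 * measure B S) = ennreal (1/2 * measure A S + 1/2 * measure B S)"
      by (rule ennreal_plus[symmetric]) auto
    show ?thesis unfolding h1 h2 h3 ..
  qed
  finally show ?thesis by (subst (asm) ennreal_inj) auto
qed

lemma pow_half: "2 powr (- real n) = (1/2::real)^n"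
  by (simp add: powr_minus powr_realpow power_one_over inverse_eq_divide)

lemma small_tail:
  assumes g: "\<forall>t\<ge>2. g t = 2 powr (- real t)" and N: "2 \<le> N"
  shows "measure (Qprod g) {w\<in>Omega. \<exists>t\<ge>N. w t} \<le> 2 * (1/2)^N"
proof -
  interpret Q: prob_space "Qprod g" by (rule prob_Qprod)
  define D where "D i = {w\<in>Omega. \<forall>s\<in>{N+i}. w s = (\<lambda>_. True) s}" for i
  have "D i \<in> sets (Qprod g)" for i unfolding D_def by (rule cyl_sets) (use N in auto)
  then have Ds: "range D \<subseteq> sets (Qprod g)" by auto
  have Dm: "measure (Qprod g) (D i) = (1/2)^N * (1/2)^i" for i
  proof -
    have "measure (Qprod g) (D i) = pmf (bernoulli_pmf (g (N+i))) True"
      unfolding D_def using N by (subst cyl_meas) auto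
    also have "\<dots> = 2 powr (- real (N+i))" using g N pw[of "N+i"] by simp
    also have "\<dots> = (1/2)^N * (1/2)^i" unfolding pow_half by (simp add: power_add)
    finally show ?thesis .
  qed
  have sg: "summable (\<lambda>i. (1/2::real)^N * (1/2)^i)"
    by (intro summable_mult summable_geometric) simp
  have "{w\<in>Omega. \<exists>t\<ge>N. w t} = (\<Union>i. D i)"
  proof (intro set_eqI iffI)
    fix w assume "w \<in> {w\<in>Omega. \<exists>t\<ge>N. w t}"
    then obtain t where "w \<in> Omega" "t \<ge> N" "w t" by auto
    then have "w \<in> D (t - N)" unfolding D_def by simp
    then show "w \<in> (\<Union>i. D i)" by blast
  next
    fix w assume "w \<in> (\<Union>i. D i)"
    then obtain i where "w \<in> D i" by blast
    then have "w \<in> Omega" "w (N+i)" unfolding D_def by auto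
    then show "w \<in> {w\<in>Omega. \<exists>t\<ge>N. w t}" using le_add1[of N i] by blast
  qed
  then have "measure (Qprod g) {w\<in>Omega. \<exists>t\<ge>N. w t} = measure (Qprod g) (\<Union>i. D i)" by simp
  also have "\<dots> \<le> (\<Sum>i. measure (Qprod g) (D i))"
    using Ds sg by (intro Q.finite_measure_subadditive_countably) (simp_all add: Dm)
  also have "\<dots> = (\<Sum>i. (1/2::real)^N * (1/2)^i)" unfolding Dm ..
  also have "\<dots> = (1/2)^N * 2"
    by (subst suminf_mult) (auto simp: suminf_geometric)
  finally show ?thesis by simp
qed

definition U :: "((nat \<Rightarrow> bool) \<Rightarrow> enat) \<Rightarrow> (nat \<Rightarrow> bool) set" where
  "U \<tau> = {w\<in>Omega. \<tau> w < \<infinity>}"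

lemma U_sets:
  assumes "stopping_time Fil \<tau>"
  shows "U \<tau> \<in> sets (Qprod g)"
proof -
  have "{w\<in>Omega. \<tau> w \<le> enat k} \<in> sets (Fil (enat k))" for k
    using stopping_timeD[OF assms, of "enat k"] by (simp add: Measurable.pred_def)
  then have r: "range (\<lambda>k. {w\<in>Omega. \<tau> w \<le> enat k}) \<subseteq> sets (Qprod g)"
    using Fil_sub_Qprod by blast
  have "\<tau> w < \<infinity> \<longleftrightarrow> (\<exists>k. \<tau> w \<le> enat k)" for w by (cases "\<tau> w") auto
  then have "U \<tau> = (\<Union>k. {w\<in>Omega. \<tau> w \<le> enat k})"
    unfolding U_def by auto
  then show ?thesis using sets.countable_UN[OF r] by simp
qed

lemma sup_Pfam: "(SUP P\<in>Pfam. f P) = max (f P1) (f P2 :: real)"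
  unfolding Pfam_def by (subst cSup_eq_Max) auto

lemma lower:
  assumes "stopping_time Fil \<tau>" "A_inf \<subseteq> U \<tau>"
  shows "1/2 \<le> (SUP P\<in>Pfam. measure P (U \<tau>))"
proof -
  interpret P: prob_space P1 by (rule prob_P1)
  have B1s: "B1 \<in> sets P1" using B1_sets sets_P1 by blast
  have Us: "U \<tau> \<in> sets P1" using U_sets[OF assms(1)] sets_P1 by blast
  have "ennreal (1/2) \<le> ennreal (measure P1 B1)"
    using P1_B1 by (simp add: P.emeasure_eq_measure half_enn)
  then have "1/2 \<le> measure P1 B1" by (subst (asm) ennreal_le_iff) auto
  also have "\<dots> \<le> measure P1 (U \<tau>)"
    using assms(2) Us unfolding B1_def by (intro P.finite_measure_mono) auto
  finally show ?thesis unfolding sup_Pfam by simp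
qed

definition tN :: "nat \<Rightarrow> (nat \<Rightarrow> bool) \<Rightarrow> enat" where
  "tN N w = (if \<exists>t\<ge>N. w t then enat (LEAST t. N \<le> t \<and> w t) else \<infinity>)"

lemma tN_st:
  assumes N: "2 \<le> N"
  shows "stopping_time Fil (tN N)"
proof (rule stopping_timeI')
  fix k
  have "tN N w \<le> enat k \<longleftrightarrow> (\<exists>t\<in>{N..k}. w t)" for w
  proof (cases "\<exists>t\<ge>N. w t")
    case True
    then have LI: "N \<le> (LEAST t. N \<le> t \<and> w t) \<and> w (LEAST t. N \<le> t \<and> w t)" by (rule LeastI_ex)
    have L: "(LEAST t. N \<le> t \<and> w t) \<le> ta" if "N \<le> ta" "w ta" for ta
      by (rule Least_le) (use that in auto)
    show ?thesis
    proof
      assume "tN N w \<le> enat k"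
      then have "(LEAST t. N \<le> t \<and> w t) \<le> k" using True unfolding tN_def by simp
      then show "\<exists>t\<in>{N..k}. w t" using LI by auto
    next
      assume "\<exists>t\<in>{N..k}. w t"
      then obtain ta where "N \<le> ta" "ta \<le> k" "w ta" by auto
      then have "(LEAST t. N \<le> t \<and> w t) \<le> k" using L[of ta] by linarith
      then show "tN N w \<le> enat k" using True unfolding tN_def by simp
    qed
  next
    case False
    then show ?thesis unfolding tN_def by auto
  qed
  then have eq: "{w\<in>Omega. tN N w \<le> enat k} = (\<Union>t\<in>{N..k}. {w\<in>Omega. w t \<in> {True}})" by auto
  show "{w\<in>Omega. tN N w \<le> enat k} \<in> sets (Fil (enat k))"
    unfolding eq using N by (intro sets.finite_UN Fil_gen) auto
qed

lemma tN_U: "U (tN N) = {w\<in>Omega. \<exists>t\<ge>N. w t}"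
  unfolding U_def tN_def by auto

lemma tN_A: "A_inf \<subseteq> U (tN N)"
proof
  fix w assume "w \<in> A_inf"
  then have w: "w \<in> Omega" "infinite {t. 1 \<le> t \<and> w t}" unfolding A_inf_def by auto
  have "\<exists>t\<ge>N. w t"
  proof (rule ccontr)
    assume "\<not> (\<exists>t\<ge>N. w t)"
    then have "{t. 1 \<le> t \<and> w t} \<subseteq> {..<N}" by (auto simp: not_le[symmetric])
    then show False using w(2) finite_subset by blast
  qed
  then show "w \<in> U (tN N)" unfolding tN_U using w by auto
qed

lemma upper:
  assumes N: "2 \<le> N"
  shows "(SUP P\<in>Pfam. measure P (U (tN N))) \<le> 1/2 + (1/2)^N"
proof -
  let ?U = "{w\<in>Omega. \<exists>t\<ge>N. w t}"
  have Us: "?U \<in> sets (Qprod (\<lambda>_. 0))" using U_sets[OF tN_st[OF N]] unfolding tN_U .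
  have g1: "\<forall>t\<ge>2. (\<lambda>t. if t = 1 then 0 else 2 powr (- real t)) t = 2 powr (- real t)" by simp
  have g2: "\<forall>t\<ge>2. (\<lambda>t. if t = 1 then 1 else 2 powr (- real t)) t = 2 powr (- real t)" by simp
  have m1: "measure P1 ?U = 1/2 * measure Q1 ?U + 1/2 * measure Q0 ?U"
    using P1_eq[OF Us] unfolding Q1_def Q0_def
    by (intro meas_mix prob_P1 prob_Qprod)
  have m2: "measure P2 ?U = 1/2 * measure R1 ?U + 1/2 * measure R0 ?U"
    using P2_eq[OF Us] unfolding R1_def R0_def
    by (intro meas_mix prob_P2 prob_Qprod)
  have q1: "measure Q1 ?U \<le> 1" unfolding Q1_def by (rule prob_space.prob_le_1[OF prob_Qprod])
  have r0: "measure R0 ?U \<le> 1" unfolding R0_def by (rule prob_space.prob_le_1[OF prob_Qprod])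
  have q0: "measure Q0 ?U \<le> 2 * (1/2)^N" unfolding Q0_def by (rule small_tail[OF g1 N])
  have r1: "measure R1 ?U \<le> 2 * (1/2)^N" unfolding R1_def by (rule small_tail[OF g2 N])
  show ?thesis unfolding sup_Pfam tN_U using m1 m2 q1 r0 q0 r1 by simp
qed

lemma mu_part: "mu_star A_inf = 1/2"
proof -
  let ?T = "{\<tau> :: (nat \<Rightarrow> bool) \<Rightarrow> enat. stopping_time Fil \<tau> \<and> A_inf \<subseteq> {w \<in> Omega. \<tau> w < \<infinity>}}"
  let ?g = "\<lambda>\<tau>. SUP P \<in> Pfam. measure P {w \<in> Omega. \<tau> w < \<infinity>}"
  have mem: "tN N \<in> ?T" if "2 \<le> N" for N
    using tN_st[OF that] tN_A[of N] unfolding U_def by auto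
  have ne: "?T \<noteq> {}" using mem[of 2] by auto
  have lo: "1/2 \<le> ?g \<tau>" if "\<tau> \<in> ?T" for \<tau>
    using lower[of \<tau>] that unfolding U_def by auto
  have bdd: "bdd_below (?g ` ?T)" by (rule bdd_belowI2, rule lo)
  have ge: "1/2 \<le> (INF \<tau>\<in>?T. ?g \<tau>)" using ne lo by (intro cINF_greatest) auto
  have le: "(INF \<tau>\<in>?T. ?g \<tau>) \<le> 1/2 + (1/2)^N" if "2 \<le> N" for N
  proof -
    have "(INF \<tau>\<in>?T. ?g \<tau>) \<le> ?g (tN N)" using bdd mem[OF that] by (rule cINF_lower)
    also have "\<dots> \<le> 1/2 + (1/2)^N" using upper[OF that] unfolding U_def .
    finally show ?thesis .
  qed
  have "(INF \<tau>\<in>?T. ?g \<tau>) \<le> 1/2"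
  proof (rule ccontr)
    assume "\<not> ?thesis"
    then have pos: "0 < (INF \<tau>\<in>?T. ?g \<tau>) - 1/2" by simp
    obtain n where n: "(1/2::real)^n < (INF \<tau>\<in>?T. ?g \<tau>) - 1/2"
      using real_arch_pow_inv[OF pos, of "1/2"] by auto
    have "(1/2::real)^(n+2) \<le> (1/2)^n" by (rule power_decreasing) auto
    moreover have "(INF \<tau>\<in>?T. ?g \<tau>) \<le> 1/2 + (1/2)^(n+2)" by (rule le) simp
    ultimately show False using n by linarith
  qed
  then show ?thesis unfolding mu_star_def using ge by simp
qed


theorem mainTheorem10:
  shows "mu_star A_inf = 1/2 \<and>
    (\<forall>E (c::real). e_process E \<and> 1 \<le> c \<and> (\<forall>w \<in> A_inf. ennreal c \<le> (SUP t. E t w))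
        \<longrightarrow> c < 2)"
  using mu_part eproc_part by blast

end
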